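(* For every $n\in\mathbb{N}$ there is a constant $c_n>0$ such that for all $t\in(0,1/2]$ and all $\lambda_1,\dots,\lambda_n>0$ with $\lambda_1\lambda_2\cdots\lambda_n=1$, $$\sqrt{\sum_{i=1}^n(\lambda_i-1)^2}\le c_nt^{-n}\left(\prod_{i=1}^n\big(t+(1-t)\lambda_i\big)-1\right)+c_nt^{-1/2}\sqrt{\prod_{i=1}^n\big(t+(1-t)\lambda_i\big)-1}.$$ *)

theory Defs
  imports Complex_Main
begin

end

theory Submission
  imports Defs
begin

lemma mu_pos: "0 < t \<Longrightarrow> t \<le> 1/2 \<Longrightarrow> 0 < x \<Longrightarrow> t + (1-t)*x > (0::real)"
  using mult_pos_pos[of "1-t" x] by linarith

definition H :: "real \<Rightarrow> real \<Rightarrow> real" where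
  "H t x = ln (t + (1-t)*x) - (1-t) * ln x"

lemma H_deriv:
  assumes "0 < t" "t \<le> 1/2" "0 < x"
  shows "DERIV (H t) x :> (1-t)*t*(x-1)/(x*(t+(1-t)*x))"
proof -
  have p: "t + (1-t)*x > 0" using assms by (rule mu_pos)
  have "DERIV (\<lambda>x. ln (t + (1-t)*x) - (1-t) * ln x) x :> (1-t)/(t+(1-t)*x) - (1-t)*(1/x)"
    by (rule derivative_eq_intros refl | use p assms in auto)+
  moreover have "(1-t)/(t+(1-t)*x) - (1-t)*(1/x) = (1-t)*t*(x-1)/(x*(t+(1-t)*x))"
    using p assms by (simp add: field_simps)
  ultimately show ?thesis unfolding H_def[abs_def] by simp
qed

lemma H_one: "H t 1 = 0" by (simp add: H_def)

lemma H_le1: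
  assumes "0 < t" "t \<le> 1/2" "0 < x" "x \<le> 1"
  shows "H t x \<ge> t*(1-x)^2/4"
proof -
  let ?g = "\<lambda>s. H t s - t*(1-s)^2/4"
  have "?g 1 \<le> ?g x"
  proof (rule DERIV_nonpos_imp_nonincreasing[OF assms(4)])
    fix s assume s: "x \<le> s" "s \<le> 1"
    hence s0: "0 < s" using assms by simp
    have p: "t + (1-t)*s > 0" using assms s0 by (intro mu_pos) auto
    have "(1-t)*s \<le> (1-t)*1" using assms s by (intro mult_left_mono) auto
    hence q: "t + (1-t)*s \<le> 1" by simp
    have d2: "DERIV (\<lambda>s. t*(1-s)^2/4) s :> t*(2*(1-s)*(-1))/4"
      by (auto intro!: derivative_eq_intros)
    have "DERIV ?g s :> (1-t)*t*(s-1)/(s*(t+(1-t)*s)) - t*(2*(1-s)*(-1))/4"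
      by (rule DERIV_diff[OF H_deriv[OF assms(1,2) s0] d2])
    moreover have "(1-t)*t*(s-1)/(s*(t+(1-t)*s)) - t*(2*(1-s)*(-1))/4 \<le> 0"
    proof -
      have sq: "s*(t+(1-t)*s) \<le> 1" using s q p s0 by (intro mult_le_one) auto
      have sqp: "s*(t+(1-t)*s) > 0" using p s0 by simp
      have "1/2 * (s*(t+(1-t)*s)) \<le> 1 - t" using sq assms by linarith
      hence "(1-t)/(s*(t+(1-t)*s)) \<ge> 1/2" using sqp by (simp add: le_divide_eq)
      hence X: "t*(1-s)*((1-t)/(s*(t+(1-t)*s))) \<ge> t*(1-s)*(1/2)"
        using assms s by (intro mult_left_mono) auto
      have e0: "(1-t)*t*(s-1) = -(t*(1-s)*(1-t))" by (simp add: algebra_simps)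
      have "(1-t)*t*(s-1)/(s*(t+(1-t)*s)) = -(t*(1-s)*(1-t))/(s*(t+(1-t)*s))" by (simp only: e0)
      also have "\<dots> = - (t*(1-s)*((1-t)/(s*(t+(1-t)*s))))" by simp
      finally have e1: "(1-t)*t*(s-1)/(s*(t+(1-t)*s)) = - (t*(1-s)*((1-t)/(s*(t+(1-t)*s))))" .
      have e2: "t*(2*(1-s)*(-1))/4 = -(t*(1-s)*(1/2))" by (simp add: field_simps)
      show ?thesis unfolding e1 e2 using X by linarith
    qed
    ultimately show "\<exists>y. DERIV ?g s :> y \<and> y \<le> 0" by blast
  qed
  thus ?thesis by (simp add: H_one)
qed

lemma H_12:
  assumes "0 < t" "t \<le> 1/2" "1 \<le> x" "x \<le> 2"
  shows "H t x \<ge> t*(x-1)^2/16"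
proof -
  let ?g = "\<lambda>s. H t s - t*(s-1)^2/16"
  have "?g 1 \<le> ?g x"
  proof (rule DERIV_nonneg_imp_nondecreasing[OF assms(3)])
    fix s assume s: "1 \<le> s" "s \<le> x"
    hence s0: "0 < s" using assms by simp
    have p: "t + (1-t)*s > 0" using assms s0 by (intro mu_pos) auto
    have "t*1 \<le> t*s" using assms s by (intro mult_left_mono) auto
    hence q: "t + (1-t)*s \<le> s" by (simp add: algebra_simps)
    have d2: "DERIV (\<lambda>s. t*(s-1)^2/16) s :> t*(2*(s-1)*1)/16"
      by (auto intro!: derivative_eq_intros)
    have "DERIV ?g s :> (1-t)*t*(s-1)/(s*(t+(1-t)*s)) - t*(2*(s-1)*1)/16"
      by (rule DERIV_diff[OF H_deriv[OF assms(1,2) s0] d2])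
    moreover have "(1-t)*t*(s-1)/(s*(t+(1-t)*s)) - t*(2*(s-1)*1)/16 \<ge> 0"
    proof -
      have "s*(t+(1-t)*s) \<le> 2*2" using s q p s0 assms by (intro mult_mono) auto
      hence sq: "s*(t+(1-t)*s) \<le> 4" by simp
      have sqp: "s*(t+(1-t)*s) > 0" using p s0 by simp
      have "1/8 * (s*(t+(1-t)*s)) \<le> 1 - t" using sq assms by linarith
      hence "(1-t)/(s*(t+(1-t)*s)) \<ge> 1/8" using sqp by (simp add: le_divide_eq)
      hence X: "t*(s-1)*((1-t)/(s*(t+(1-t)*s))) \<ge> t*(s-1)*(1/8)"
        using assms s by (intro mult_left_mono) auto
      have e0: "(1-t)*t*(s-1) = t*(s-1)*(1-t)" by (simp add: algebra_simps)
      have "(1-t)*t*(s-1)/(s*(t+(1-t)*s)) = t*(s-1)*(1-t)/(s*(t+(1-t)*s))" by (simp only: e0)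
      also have "\<dots> = t*(s-1)*((1-t)/(s*(t+(1-t)*s)))" by simp
      finally have e1: "(1-t)*t*(s-1)/(s*(t+(1-t)*s)) = t*(s-1)*((1-t)/(s*(t+(1-t)*s)))" .
      have e2: "t*(2*(s-1)*1)/16 = t*(s-1)*(1/8)" by simp
      show ?thesis unfolding e1 e2 using X by linarith
    qed
    ultimately show "\<exists>y. DERIV ?g s :> y \<and> y \<ge> 0" by blast
  qed
  thus ?thesis by (simp add: H_one)
qed

lemma H_mono:
  assumes "0 < t" "t \<le> 1/2" "1 \<le> a" "a \<le> x"
  shows "H t a \<le> H t x"
proof (rule DERIV_nonneg_imp_nondecreasing[OF assms(4)])
  fix s assume s: "a \<le> s" "s \<le> x"
  hence s0: "0 < s" using assms by simp
  have p: "t + (1-t)*s > 0" using assms s0 by (intro mu_pos) auto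
  have "(1-t)*t*(s-1)/(s*(t+(1-t)*s)) \<ge> 0" using assms s p s0 by simp
  thus "\<exists>y. DERIV (H t) s :> y \<and> y \<ge> 0" using H_deriv[OF assms(1,2) s0] by blast
qed

lemma H_bound:
  assumes "0 < t" "t \<le> 1/2" "0 < x"
  shows "H t x \<ge> t/16 * min ((x-1)^2) 1"
proof (cases "x \<le> 1")
  case True
  have "(1-x)^2 \<le> 1" using True assms by (intro power_le_one) auto
  hence "(x-1)^2 \<le> 1" by (simp add: power2_commute)
  hence "t/16 * min ((x-1)^2) 1 = t*(1-x)^2/16" by (simp add: power2_commute)
  also have "\<dots> \<le> t*(1-x)^2/4" using assms by simp
  finally show ?thesis using H_le1[OF assms True] by simp
next
  case False
  show ?thesis
  proof (cases "x \<le> 2")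
    case True
    have "(x-1)^2 \<le> 1" using True False by (intro power_le_one) auto
    thus ?thesis using H_12[OF assms(1,2) _ True] False by simp
  next
    case F2: False
    have "t/16 \<le> H t 2" using H_12[of t 2] assms by simp
    also have "\<dots> \<le> H t x" using H_mono[of t 2 x] assms F2 by simp
    finally have "t/16 \<le> H t x" .
    moreover have "1 \<le> (x-1)^2" using F2 by (intro one_le_power) auto
    ultimately show ?thesis by simp
  qed
qed


theorem mainTheorem13:
  fixes n :: nat
  shows "\<exists>c::real. c > 0 \<and>
    (\<forall>(t::real) (l::nat \<Rightarrow> real).
       0 < t \<and> t \<le> 1/2 \<and> (\<forall>i\<in>{1..n}. l i > 0) \<and> (\<Prod>i=1..n. l i) = 1 \<longrightarrow>
       sqrt (\<Sum>i=1..n. (l i - 1)^2)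
         \<le> c * (1 / t ^ n) * ((\<Prod>i=1..n. t + (1 - t) * l i) - 1)
           + c * t powr (-1/2) * sqrt ((\<Prod>i=1..n. t + (1 - t) * l i) - 1))"
proof (intro exI[of _ "34 * (real n + 1)"] conjI allI impI)
  show "0 < 34 * (real n + 1)" by simp
  fix t :: real and l :: "nat \<Rightarrow> real"
  assume A: "0 < t \<and> t \<le> 1/2 \<and> (\<forall>i\<in>{1..n}. l i > 0) \<and> (\<Prod>i=1..n. l i) = 1"
  define S where "S = {1..n}"
  define c where "c = 34 * (real n + 1)"
  define P where "P = (\<Prod>i\<in>S. t + (1 - t) * l i)"
  define D where "D = P - 1"
  have t0: "0 < t" and t2: "t \<le> 1/2" and lpos: "\<And>i. i \<in> S \<Longrightarrow> l i > 0"
    and lprod: "(\<Prod>i\<in>S. l i) = 1" using A by (auto simp: S_def)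
  have fin: "finite S" by (simp add: S_def)
  have cardS: "card S = n" by (simp add: S_def)
  have mupos: "t + (1-t) * l i > 0" if "i \<in> S" for i
    using lpos[OF that] t0 t2 by (intro mu_pos) auto
  have Pp: "P > 0" unfolding P_def using mupos by (simp add: prod_pos)
  have "ln P = (\<Sum>i\<in>S. ln (t + (1-t) * l i))"
    unfolding P_def by (intro ln_prod fin) (use mupos in force)
  also have "\<dots> = (\<Sum>i\<in>S. H t (l i) + (1-t) * ln (l i))"
    by (intro sum.cong refl) (simp add: H_def)
  also have "\<dots> = (\<Sum>i\<in>S. H t (l i)) + (1-t) * (\<Sum>i\<in>S. ln (l i))"
    by (simp add: sum.distrib sum_distrib_left)
  also have "(\<Sum>i\<in>S. ln (l i)) = ln (\<Prod>i\<in>S. l i)"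
    by (intro ln_prod[symmetric] fin) (use lpos in force)
  finally have lnP: "ln P = (\<Sum>i\<in>S. H t (l i))" using lprod by simp
  have Hb: "t/16 * min ((l i - 1)^2) 1 \<le> H t (l i)" if "i \<in> S" for i
    using H_bound[OF t0 t2 lpos[OF that]] .
  have Hnn: "H t (l i) \<ge> 0" if "i \<in> S" for i
  proof -
    have "0 \<le> t/16 * min ((l i - 1)^2) 1" using t0 by simp
    thus ?thesis using Hb[OF that] by linarith
  qed
  have DlnP: "ln P \<le> D" unfolding D_def using ln_le_minus_one[OF Pp] .
  have Dj: "t/16 * min ((l j - 1)^2) 1 \<le> D" if "j \<in> S" for j
  proof -
    have "H t (l j) \<le> (\<Sum>i\<in>S. H t (l i))"
      by (rule member_le_sum[OF that _ fin]) (use Hnn in auto)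
    thus ?thesis using Hb[OF that] lnP DlnP by linarith
  qed
  have D0: "D \<ge> 0"
  proof -
    have "0 \<le> (\<Sum>i\<in>S. H t (l i))" using Hnn by (simp add: sum_nonneg)
    thus ?thesis using lnP DlnP by linarith
  qed
  have sqn: "sqrt (real n) \<le> real n + 1"
  proof -
    have "(real n+1)*1 \<le> (real n+1)*(real n+1)" by (intro mult_left_mono) auto
    hence "real n \<le> (real n + 1)^2" unfolding power2_eq_square mult_1_right by linarith
    hence "sqrt (real n) \<le> sqrt ((real n + 1)^2)" by (intro real_sqrt_le_mono)
    thus ?thesis by simp
  qed
  have T1: "0 \<le> c * (1 / t ^ n) * D" using D0 t0 by (simp add: c_def)
  have T2: "0 \<le> c * t powr (-1/2) * sqrt D" using D0 t0 by (simp add: c_def)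
  have goal: "sqrt (\<Sum>i\<in>S. (l i - 1)^2) \<le> c * (1 / t ^ n) * D + c * t powr (-1/2) * sqrt D"
  proof (cases "\<forall>j\<in>S. (l j - 1)^2 \<le> 1")
    case True
    have b: "(l j - 1)^2 \<le> 16 * D / t" if "j \<in> S" for j
    proof -
      have "t/16 * (l j - 1)^2 \<le> D" using Dj[OF that] True that by simp
      thus ?thesis using t0 by (simp add: field_simps)
    qed
    have "(\<Sum>i\<in>S. (l i - 1)^2) \<le> real n * (16 * D / t)"
      using sum_bounded_above[of S "\<lambda>i. (l i - 1)^2", OF b] cardS by simp
    hence "sqrt (\<Sum>i\<in>S. (l i - 1)^2) \<le> sqrt (real n * (16 * D / t))"
      by (rule real_sqrt_le_mono)
    also have "\<dots> = 4 * sqrt (real n) * (sqrt D / sqrt t)"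
      by (simp add: real_sqrt_mult real_sqrt_divide)
    also have "t powr (-1/2) = 1 / sqrt t"
      using t0 by (simp add: powr_minus_divide powr_half_sqrt)
    hence "4 * sqrt (real n) * (sqrt D / sqrt t) \<le> c * t powr (-1/2) * sqrt D"
    proof -
      assume e: "t powr (-1/2) = 1 / sqrt t"
      have "4 * sqrt (real n) \<le> c" using sqn by (simp add: c_def)
      hence "4 * sqrt (real n) * (sqrt D / sqrt t) \<le> c * (sqrt D / sqrt t)"
        using D0 t0 by (intro mult_right_mono) auto
      thus ?thesis using e by simp
    qed
    finally show ?thesis using T1 by linarith
  next
    case False
    then obtain j where j: "j \<in> S" "(l j - 1)^2 > 1" by auto
    have Dt: "t/16 \<le> D" using Dj[OF j(1)] j(2) by simp
    have n1: "n \<ge> 1" using j(1) by (simp add: S_def)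
    have P1: "P = 1 + D" by (simp add: D_def)
    have tn: "t ^ n = t * t ^ (n-1)" using n1 by (cases n) auto
    have tpos: "t ^ (n-1) > 0" "t ^ (n-1) \<le> 1" using t0 t2 by (auto intro: power_le_one)
    have li: "l i \<le> 2 * P / t ^ (n-1)" if "i \<in> S" for i
    proof -
      have "(\<Prod>k\<in>S-{i}. t) \<le> (\<Prod>k\<in>S-{i}. t + (1-t) * l k)"
      proof (rule prod_mono)
        fix k assume k: "k \<in> S - {i}"
        have "0 < (1-t) * l k" using t2 lpos[of k] k by (intro mult_pos_pos) auto
        thus "0 \<le> t \<and> t \<le> t + (1-t) * l k" using t0 by simp
      qed
      moreover have "(\<Prod>k\<in>S-{i}. t) = t ^ (n-1)" using that fin cardS by simp
      ultimately have r: "t ^ (n-1) \<le> (\<Prod>k\<in>S-{i}. t + (1-t) * l k)" by simp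
      have "1/2 * l i \<le> (1-t) * l i" using t2 lpos[OF that] by (intro mult_right_mono) auto
      hence m: "l i / 2 \<le> t + (1-t) * l i" using t0 by linarith
      have "P = (t + (1-t) * l i) * (\<Prod>k\<in>S-{i}. t + (1-t) * l k)"
        unfolding P_def using that fin by (simp add: prod.remove)
      also have "\<dots> \<ge> l i / 2 * t ^ (n-1)"
        using m r lpos[OF that] tpos by (intro mult_mono) auto
      finally show ?thesis using tpos by (simp add: field_simps)
    qed
    define B where "B = 34 * D / t ^ n"
    have PB: "2 * P / t ^ (n-1) \<le> B"
    proof -
      have a1: "1 \<le> 16 * D / t" using Dt t0 by (simp add: le_divide_eq)
      have "D * t \<le> D" using t2 D0 by (intro mult_left_le) auto
      hence a2: "D \<le> D / t" using t0 by (simp add: le_divide_eq)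
      have "1 + D \<le> 17 * D / t" using a1 a2 by (simp add: add_divide_distrib[symmetric])
      hence "2 * P \<le> 2 * (17 * D / t)" using P1 by simp
      hence "2 * P / t ^ (n-1) \<le> 2 * (17 * D / t) / t ^ (n-1)" by (rule divide_right_mono) (use tpos in auto)
      also have "\<dots> = 34 * D / (t * t ^ (n-1))" by (simp add: divide_divide_eq_left)
      finally show ?thesis unfolding B_def tn .
    qed
    have B1: "1 \<le> B"
    proof -
      have "2 * P * t ^ (n-1) \<le> 2 * P" using tpos Pp by (intro mult_left_le) auto
      hence "2 * P \<le> 2 * P / t ^ (n-1)" using tpos by (simp add: le_divide_eq)
      hence "2 \<le> 2 * P / t ^ (n-1)" using P1 D0 by linarith
      thus ?thesis using PB by simp
    qed
    have b: "(l i - 1)^2 \<le> B^2" if "i \<in> S" for i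
    proof -
      have "\<bar>l i - 1\<bar> \<le> B" using li[OF that] PB B1 lpos[OF that] by linarith
      hence "\<bar>l i - 1\<bar>^2 \<le> B^2" by (intro power_mono) auto
      thus ?thesis by simp
    qed
    have "(\<Sum>i\<in>S. (l i - 1)^2) \<le> real n * B^2"
      using sum_bounded_above[of S "\<lambda>i. (l i - 1)^2", OF b] cardS by simp
    hence "sqrt (\<Sum>i\<in>S. (l i - 1)^2) \<le> sqrt (real n * B^2)"
      by (rule real_sqrt_le_mono)
    also have "\<dots> = sqrt (real n) * B" using B1 by (simp add: real_sqrt_mult)
    also have "\<dots> \<le> c * (1 / t ^ n) * D"
    proof -
      have "sqrt (real n) * B \<le> (real n + 1) * B" using sqn B1 by (intro mult_right_mono) auto
      also have "\<dots> = c * (1 / t ^ n) * D" by (simp add: B_def c_def)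
      finally show ?thesis .
    qed
    finally show ?thesis using T2 by linarith
  qed
  thus "sqrt (\<Sum>i=1..n. (l i - 1)^2)
         \<le> 34 * (real n + 1) * (1 / t ^ n) * ((\<Prod>i=1..n. t + (1 - t) * l i) - 1)
           + 34 * (real n + 1) * t powr (-1/2) * sqrt ((\<Prod>i=1..n. t + (1 - t) * l i) - 1)"
    by (simp add: S_def c_def D_def P_def)
qed

end
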